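(* Let $D$ be a dataset, $\Omega=\{\omega_1,\dots,\omega_k\}$ a finite set of outcomes, $q$ a real-valued quality function with sensitivity $\Delta>0$, and $\varepsilon>0$; let $q_*=\max_i q(D,\omega_i)$. Then the output distributions of Intermediate Algorithm B and of Report Noisy Max with Exponential Noise (both defined below) on these inputs are the same.
   Context: $\mathrm{Expo}(\lambda)$ denotes the exponential distribution with rate $\lambda$, density $\lambda e^{-\lambda x}\mathbf{1}[x\ge0]$. Intermediate Algorithm B: compute $q_*$; for each $i=1,\dots,k$ independently set $v_i^\top=\min\{q_*,\,q(D,\omega_i)+X_i\}$ with $X_i\sim\mathrm{Expo}(\varepsilon/(2\Delta))$ and draw $z_i\sim\mathrm{Expo}(\varepsilon/(2\Delta))$ (all these random variables independent); let $S'=\{i: v_i^\top=q_*\}$; return $\arg\max_{i\in S'}(v_i^\top+z_i)$ (ties occur with probability zero). Report Noisy Max with Exponential Noise: for each $i=1,\dots,k$ independently set $v_i=q(D,\omega_i)+Y_i$ with $Y_i\sim\mathrm{Expo}(\varepsilon/(2\Delta))$; return $\arg\max_i v_i$ (ties occur with probability zero). *)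

theory Defs
  imports "HOL-Probability.Probability"
begin

text \<open>Outcomes are indexed by 0..k-1 (the paper's 1..k). Exp(l) on the reals.\<close>
definition expo :: "real \<Rightarrow> real measure" where
  "expo l = density lborel (exponential_density l)"

definition expo_vec :: "nat \<Rightarrow> real \<Rightarrow> (nat \<Rightarrow> real) measure" where
  "expo_vec k l = (\<Pi>\<^sub>M i\<in>{..<k}. expo l)"

text \<open>Argmax over a finite index set; ties (a probability-zero event) broken by least index.\<close>
definition argmax_idx :: "(nat \<Rightarrow> real) \<Rightarrow> nat set \<Rightarrow> nat" where
  "argmax_idx v S = (LEAST i. i \<in> S \<and> (\<forall>j\<in>S. v j \<le> v i))"

definition q_star :: "('d \<Rightarrow> 'o \<Rightarrow> real) \<Rightarrow> 'd \<Rightarrow> (nat \<Rightarrow> 'o) \<Rightarrow> nat \<Rightarrow> real" where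
  "q_star q D \<omega> k = Max ((\<lambda>i. q D (\<omega> i)) ` {..<k})"

definition rnm_out :: "('d \<Rightarrow> 'o \<Rightarrow> real) \<Rightarrow> 'd \<Rightarrow> (nat \<Rightarrow> 'o) \<Rightarrow> nat \<Rightarrow> (nat \<Rightarrow> real) \<Rightarrow> 'o" where
  "rnm_out q D \<omega> k Y = \<omega> (argmax_idx (\<lambda>i. q D (\<omega> i) + Y i) {..<k})"

definition algB_out :: "('d \<Rightarrow> 'o \<Rightarrow> real) \<Rightarrow> 'd \<Rightarrow> (nat \<Rightarrow> 'o) \<Rightarrow> nat \<Rightarrow> (nat \<Rightarrow> real) \<times> (nat \<Rightarrow> real) \<Rightarrow> 'o" where
  "algB_out q D \<omega> k Xz =
     (let qs = q_star q D \<omega> k;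
          v = (\<lambda>i. min qs (q D (\<omega> i) + fst Xz i));
          S' = {i \<in> {..<k}. v i = qs}
      in \<omega> (argmax_idx (\<lambda>i. v i + snd Xz i) S'))"

definition report_noisy_max_expo ::
  "('d \<Rightarrow> 'o \<Rightarrow> real) \<Rightarrow> 'd \<Rightarrow> (nat \<Rightarrow> 'o) \<Rightarrow> nat \<Rightarrow> real \<Rightarrow> real \<Rightarrow> 'o measure" where
  "report_noisy_max_expo q D \<omega> k \<epsilon> \<Delta> =
     distr (expo_vec k (\<epsilon> / (2 * \<Delta>))) (count_space UNIV) (rnm_out q D \<omega> k)"

definition intermediate_B ::
  "('d \<Rightarrow> 'o \<Rightarrow> real) \<Rightarrow> 'd \<Rightarrow> (nat \<Rightarrow> 'o) \<Rightarrow> nat \<Rightarrow> real \<Rightarrow> real \<Rightarrow> 'o measure" where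
  "intermediate_B q D \<omega> k \<epsilon> \<Delta> =
     distr (expo_vec k (\<epsilon> / (2 * \<Delta>)) \<Otimes>\<^sub>M expo_vec k (\<epsilon> / (2 * \<Delta>)))
           (count_space UNIV) (algB_out q D \<omega> k)"

end

theory Submission
  imports Defs
begin

lemma shiftK:
  fixes l c :: real and h :: "real \<Rightarrow> ennreal"
  assumes l: "0 < l" and c: "0 \<le> c" and h[measurable]: "h \<in> borel_measurable borel"
  shows "ennreal (exp (- c * l)) * (\<integral>\<^sup>+z. ennreal (exponential_density l z) * h (c + z) \<partial>lborel)
       = (\<integral>\<^sup>+x. ennreal (exponential_density l x) * indicator {c..} x * h x \<partial>lborel)"
proof -
  have "(\<integral>\<^sup>+x. ennreal (exponential_density l x) * indicator {c..} x * h x \<partial>lborel)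
      = ennreal \<bar>1::real\<bar> * (\<integral>\<^sup>+z. ennreal (exponential_density l (c + 1 * z)) * indicator {c..} (c + 1 * z) * h (c + 1 * z) \<partial>lborel)"
    by (rule nn_integral_real_affine) simp_all
  also have "\<dots> = (\<integral>\<^sup>+z. ennreal (exponential_density l (c + 1 * z)) * indicator {c..} (c + 1 * z) * h (c + 1 * z) \<partial>lborel)"
    by simp
  also have "\<dots> = (\<integral>\<^sup>+z. ennreal (exp (- c * l)) * (ennreal (exponential_density l z) * h (c + z)) \<partial>lborel)"
  proof (rule nn_integral_cong)
    fix z :: real
    show "ennreal (exponential_density l (c + 1 * z)) * indicator {c..} (c + 1 * z) * h (c + 1 * z) =
         ennreal (exp (- c * l)) * (ennreal (exponential_density l z) * h (c + z))"
    proof (cases "z < 0")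
      case True then show ?thesis by (simp add: exponential_density_def indicator_def)
    next
      case False
      then have "exponential_density l (c + z) = exp (- c * l) * exponential_density l z"
        using c by (simp add: exponential_density_def algebra_simps exp_add[symmetric])
      then show ?thesis using False
        by (simp add: indicator_def ennreal_mult' mult.assoc)
    qed
  qed
  also have "\<dots> = ennreal (exp (- c * l)) * (\<integral>\<^sup>+z. ennreal (exponential_density l z) * h (c + z) \<partial>lborel)"
    by (rule nn_integral_cmult) auto
  finally show ?thesis by simp
qed

lemma expo_emeasure:
  assumes "A \<in> sets borel"
  shows "emeasure (expo l) A = (\<integral>\<^sup>+x. ennreal (exponential_density l x) * indicator A x \<partial>lborel)"
  unfolding expo_def using assms by (subst emeasure_density) auto

lemma sets_expo[simp, measurable_cong]: "sets (expo l) = sets borel"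
  unfolding expo_def by simp

lemma space_expo[simp]: "space (expo l) = UNIV"
  unfolding expo_def by simp

lemma memoryless:
  fixes l c :: real
  assumes l: "0 < l" and c: "0 \<le> c" and A[measurable]: "A \<in> sets borel"
  shows "(\<integral>\<^sup>+x. (if c \<le> x then emeasure (expo l) {z. c + z \<in> A} else indicator A x) \<partial>expo l)
       = emeasure (expo l) A"
proof -
  let ?ed = "\<lambda>x. ennreal (exponential_density l x)"
  define F where "F = emeasure (expo l) {z. c + z \<in> A}"
  have F: "F = (\<integral>\<^sup>+z. ?ed z * indicator A (c + z) \<partial>lborel)"
    unfolding F_def by (subst expo_emeasure) (auto simp: indicator_def)
  have one: "(\<integral>\<^sup>+x. ?ed x \<partial>lborel) = 1"
  proof -
    interpret prob_space "expo l" unfolding expo_def using prob_space_exponential_density[OF l] .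
    have "emeasure (expo l) UNIV = 1" using emeasure_space_1 by simp
    then show ?thesis by (simp add: expo_emeasure)
  qed
  have t1: "(\<integral>\<^sup>+x. ?ed x * indicator {c..} x \<partial>lborel) = ennreal (exp (- c * l))"
    using shiftK[OF l c, of "\<lambda>_. 1"] one by simp
  have t2: "F * ennreal (exp (- c * l)) = (\<integral>\<^sup>+x. ?ed x * indicator {c..} x * indicator A x \<partial>lborel)"
    using shiftK[OF l c, of "indicator A"] F by (simp add: mult.commute)
  have "(\<integral>\<^sup>+x. (if c \<le> x then F else indicator A x) \<partial>expo l)
      = (\<integral>\<^sup>+x. ?ed x * (if c \<le> x then F else indicator A x) \<partial>lborel)"
    unfolding expo_def by (subst nn_integral_density) auto
  also have "\<dots> = (\<integral>\<^sup>+x. ?ed x * indicator {..<c} x * indicator A x + (?ed x * indicator {c..} x) * F \<partial>lborel)"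
    by (rule nn_integral_cong) (auto simp: indicator_def)
  also have "\<dots> = (\<integral>\<^sup>+x. ?ed x * indicator {..<c} x * indicator A x \<partial>lborel) + (\<integral>\<^sup>+x. ?ed x * indicator {c..} x \<partial>lborel) * F"
    by (subst nn_integral_add) (auto simp: nn_integral_multc)
  also have "\<dots> = (\<integral>\<^sup>+x. ?ed x * indicator {..<c} x * indicator A x \<partial>lborel) + (\<integral>\<^sup>+x. ?ed x * indicator {c..} x * indicator A x \<partial>lborel)"
    using t1 t2 by (simp add: mult.commute)
  also have "\<dots> = (\<integral>\<^sup>+x. ?ed x * indicator {..<c} x * indicator A x + ?ed x * indicator {c..} x * indicator A x \<partial>lborel)"
    by (subst nn_integral_add) auto
  also have "\<dots> = (\<integral>\<^sup>+x. ?ed x * indicator A x \<partial>lborel)"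
    by (rule nn_integral_cong) (auto simp: indicator_def)
  also have "\<dots> = emeasure (expo l) A" by (simp add: expo_emeasure)
  finally show ?thesis unfolding F_def .
qed

lemma prob_expo: "0 < l \<Longrightarrow> prob_space (expo l)"
  unfolding expo_def by (rule prob_space_exponential_density)

definition Tm :: "nat \<Rightarrow> (nat \<Rightarrow> real) \<Rightarrow> (nat \<Rightarrow> real) \<times> (nat \<Rightarrow> real) \<Rightarrow> (nat \<Rightarrow> real)" where
  "Tm k c xz = (\<lambda>i\<in>{..<k}. if c i \<le> fst xz i then c i + snd xz i else fst xz i)"

lemma Tm_measurable:
  "Tm k c \<in> measurable (expo_vec k l \<Otimes>\<^sub>M expo_vec k l) (expo_vec k l)"
  unfolding Tm_def expo_vec_def
  apply (rule measurable_restrict)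
  apply measurable
  done

lemma distr_Tm:
  assumes l: "0 < l" and c: "\<And>i. i < k \<Longrightarrow> 0 \<le> c i"
  shows "distr (expo_vec k l \<Otimes>\<^sub>M expo_vec k l) (expo_vec k l) (Tm k c) = expo_vec k l"
proof -
  interpret E: prob_space "expo l" using prob_expo[OF l] .
  interpret P: product_prob_space "\<lambda>_. expo l" "{..<k}"
    by unfold_locales
  interpret M: prob_space "expo_vec k l" unfolding expo_vec_def
    by (rule prob_space_PiM) (simp add: prob_expo[OF l])
  interpret MM: pair_sigma_finite "expo_vec k l" "expo_vec k l" by unfold_locales
  have "distr (expo_vec k l \<Otimes>\<^sub>M expo_vec k l) (Pi\<^sub>M {..<k} (\<lambda>_. expo l)) (Tm k c) = Pi\<^sub>M {..<k} (\<lambda>_. expo l)"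
  proof (rule P.PiM_eqI)
    show "finite {..<k}" by simp
    show "sets (distr (expo_vec k l \<Otimes>\<^sub>M expo_vec k l) (Pi\<^sub>M {..<k} (\<lambda>_. expo l)) (Tm k c)) =
          sets (Pi\<^sub>M {..<k} (\<lambda>_. expo l))" by simp
  next
    fix A assume A: "\<And>i. i \<in> {..<k} \<Longrightarrow> A i \<in> sets (expo l)"
    show "emeasure (distr (expo_vec k l \<Otimes>\<^sub>M expo_vec k l) (Pi\<^sub>M {..<k} (\<lambda>_. expo l)) (Tm k c)) (Pi\<^sub>E {..<k} A) = (\<Prod>i\<in>{..<k}. emeasure (expo l) (A i))"
    proof -
      let ?I = "{..<k}" and ?EV = "expo_vec k l"
      define S where "S = Tm k c -` Pi\<^sub>E ?I A \<inter> space (?EV \<Otimes>\<^sub>M ?EV)"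
      define B where "B X i = (if c i \<le> X i then {z. c i + z \<in> A i} else if X i \<in> A i then UNIV else {})" for X i
      define g where "g i x = (if c i \<le> x then emeasure (expo l) {z. c i + z \<in> A i} else indicator (A i) x)" for i x
      have Am: "A i \<in> sets borel" if "i \<in> ?I" for i using A[OF that] by simp
      have Bm: "B X i \<in> sets (expo l)" if "i \<in> ?I" for X i
      proof -
        have "(\<lambda>z. c i + z) -` A i \<inter> space borel \<in> sets borel"
          by (rule measurable_sets[OF _ Am[OF that]]) simp
        then show ?thesis unfolding B_def by (auto simp: vimage_def)
      qed
      have gm: "g i \<in> borel_measurable (expo l)" if "i \<in> ?I" for i
      proof -
        note Am[OF that, measurable]
        show ?thesis unfolding g_def by measurable
      qed
      have Tm_m: "Tm k c \<in> measurable (?EV \<Otimes>\<^sub>M ?EV) (Pi\<^sub>M ?I (\<lambda>_. expo l))"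
        using Tm_measurable[of k c l] by (simp add: expo_vec_def)
      have PA: "Pi\<^sub>E ?I A \<in> sets (Pi\<^sub>M ?I (\<lambda>_. expo l))"
        using A by (intro sets_PiM_I_finite) auto
      have Ssets: "S \<in> sets (?EV \<Otimes>\<^sub>M ?EV)"
        unfolding S_def using measurable_sets[OF Tm_m PA] .
      have "emeasure (distr (?EV \<Otimes>\<^sub>M ?EV) (Pi\<^sub>M ?I (\<lambda>_. expo l)) (Tm k c)) (Pi\<^sub>E ?I A) = emeasure (?EV \<Otimes>\<^sub>M ?EV) S"
        unfolding S_def by (rule emeasure_distr[OF Tm_m PA])
      also have "\<dots> = (\<integral>\<^sup>+X. emeasure ?EV (Pair X -` S) \<partial>?EV)"
        by (rule M.emeasure_pair_measure_alt[OF Ssets])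
      also have "\<dots> = (\<integral>\<^sup>+X. (\<Prod>i\<in>?I. g i (X i)) \<partial>?EV)"
      proof (rule nn_integral_cong)
        fix X assume X: "X \<in> space ?EV"
        have "Pair X -` S = Pi\<^sub>E ?I (B X)"
        proof (rule set_eqI)
          fix z
          have sp: "z \<in> space ?EV \<longleftrightarrow> z \<in> extensional ?I" for z
            unfolding expo_vec_def space_PiM by (simp add: PiE_iff)
          have pw: "(if c i \<le> X i then c i + z i else X i) \<in> A i \<longleftrightarrow> z i \<in> B X i" for i
            unfolding B_def by simp
          have "z \<in> Pair X -` S \<longleftrightarrow> z \<in> extensional ?I \<and> (\<forall>i\<in>?I. (if c i \<le> X i then c i + z i else X i) \<in> A i)"
            unfolding S_def Tm_def using X sp[of X] sp[of z]
            by (simp add: space_pair_measure PiE_iff conj_commute)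
          also have "\<dots> \<longleftrightarrow> z \<in> Pi\<^sub>E ?I (B X)"
            using pw by (auto simp: PiE_iff)
          finally show "z \<in> Pair X -` S \<longleftrightarrow> z \<in> Pi\<^sub>E ?I (B X)" .
        qed
        then have "emeasure ?EV (Pair X -` S) = (\<Prod>i\<in>?I. emeasure (expo l) (B X i))"
          unfolding expo_vec_def
          by (simp only: \<open>Pair X -` S = Pi\<^sub>E ?I (B X)\<close>, subst P.emeasure_PiM) (auto intro: Bm[simplified])
        also have "\<dots> = (\<Prod>i\<in>?I. g i (X i))"
          by (rule prod.cong) (auto simp: B_def g_def E.emeasure_space_1[simplified])
        finally show "emeasure ?EV (Pair X -` S) = (\<Prod>i\<in>?I. g i (X i))" .
      qed
      also have "\<dots> = (\<Prod>i\<in>?I. \<integral>\<^sup>+x. g i x \<partial>expo l)"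
        unfolding expo_vec_def
        by (rule P.product_nn_integral_prod) (auto intro: gm)
      also have "\<dots> = (\<Prod>i\<in>?I. emeasure (expo l) (A i))"
        by (rule prod.cong) (auto simp: g_def memoryless[OF l c] Am)
      finally show ?thesis .
    qed
  qed
  then show ?thesis by (simp add: expo_vec_def)
qed

lemma argmax_pw:
  fixes qi X z :: "nat \<Rightarrow> real"
  assumes k: "k \<ge> 1" and nn: "\<forall>i<k. 0 \<le> X i \<and> 0 \<le> z i"
  defines "qs \<equiv> Max (qi ` {..<k})"
  shows "argmax_idx (\<lambda>i. min qs (qi i + X i) + z i) {i\<in>{..<k}. min qs (qi i + X i) = qs}
       = argmax_idx (\<lambda>i. qi i + Tm k (\<lambda>i. qs - qi i) (X, z) i) {..<k}"
proof -
  define S' where "S' = {i\<in>{..<k}. min qs (qi i + X i) = qs}"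
  define w where "w i = min qs (qi i + X i) + z i" for i
  define u where "u i = qi i + Tm k (\<lambda>i. qs - qi i) (X, z) i" for i
  have fin: "finite (qi ` {..<k})" "qi ` {..<k} \<noteq> {}" using k by (auto simp: lessThan_empty_iff)
  obtain i0 where i0: "i0 < k" "qi i0 = qs"
    using Max_in[OF fin] unfolding qs_def by auto
  have le: "qi i \<le> qs" if "i < k" for i unfolding qs_def using fin that by auto
  have S'iff: "i \<in> S' \<longleftrightarrow> i < k \<and> qs \<le> qi i + X i" for i
    unfolding S'_def by auto
  have uS: "u i = qs + z i" if "i \<in> S'" for i
    using that unfolding S'iff u_def Tm_def by auto
  have unS: "u i = qi i + X i" "qi i + X i < qs" if "i < k" "i \<notin> S'" for i
    using that unfolding S'iff u_def Tm_def by auto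
  have wS: "w i = qs + z i" if "i \<in> S'" for i
    using that unfolding S'iff w_def by auto
  have i0S: "i0 \<in> S'" using i0 nn unfolding S'iff by auto
  have "(i \<in> {..<k} \<and> (\<forall>j\<in>{..<k}. u j \<le> u i)) \<longleftrightarrow> (i \<in> S' \<and> (\<forall>j\<in>S'. w j \<le> w i))" for i
  proof
    assume A: "i \<in> {..<k} \<and> (\<forall>j\<in>{..<k}. u j \<le> u i)"
    have "u i0 \<le> u i" using A i0 by auto
    moreover have "qs \<le> u i0" using uS[OF i0S] nn i0 by auto
    ultimately have iS: "i \<in> S'" using unS[of i] A by force
    show "i \<in> S' \<and> (\<forall>j\<in>S'. w j \<le> w i)"
    proof (intro conjI ballI iS)
      fix j assume "j \<in> S'"
      then show "w j \<le> w i" using A wS uS iS unfolding S'iff by force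
    qed
  next
    assume A: "i \<in> S' \<and> (\<forall>j\<in>S'. w j \<le> w i)"
    then have ik: "i < k" and ui: "u i = qs + z i" using S'iff uS by auto
    show "i \<in> {..<k} \<and> (\<forall>j\<in>{..<k}. u j \<le> u i)"
    proof (intro conjI ballI)
      show "i \<in> {..<k}" using ik by simp
      fix j assume j: "j \<in> {..<k}"
      show "u j \<le> u i"
      proof (cases "j \<in> S'")
        case True then show ?thesis using A uS wS by force
      next
        case False then show ?thesis using unS[of j] j ui nn ik by force
      qed
    qed
  qed
  then show ?thesis
    unfolding argmax_idx_def S'_def[symmetric] w_def[symmetric] u_def[symmetric] by simp
qed

lemma argmax_meas:
  fixes v :: "'a \<Rightarrow> nat \<Rightarrow> real"
  assumes Sm: "\<And>i. i < k \<Longrightarrow> Measurable.pred M (S i)"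
    and vm: "\<And>i. i < k \<Longrightarrow> (\<lambda>x. v x i) \<in> borel_measurable M"
  shows "(\<lambda>x. argmax_idx (v x) {i\<in>{..<k}. S i x}) \<in> measurable M (count_space UNIV)"
  unfolding argmax_idx_def
proof (rule measurable_Least)
  fix i
  show "Measurable.pred M (\<lambda>x. i \<in> {i\<in>{..<k}. S i x} \<and> (\<forall>j\<in>{i\<in>{..<k}. S i x}. v x j \<le> v x i))"
  proof (cases "i < k")
    case True
    have eq: "(\<lambda>x. i \<in> {i\<in>{..<k}. S i x} \<and> (\<forall>j\<in>{i\<in>{..<k}. S i x}. v x j \<le> v x i))
       = (\<lambda>x. S i x \<and> (\<forall>j\<in>{..<k}. S j x \<longrightarrow> v x j \<le> v x i))" using True by auto
    note [measurable] = Sm[OF True] vm[OF True]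
    have B: "Measurable.pred M (\<lambda>x. \<forall>j\<in>{..<k}. S j x \<longrightarrow> v x j \<le> v x i)"
    proof (rule pred_intros_finite(3))
      show "finite {..<k}" by simp
      fix j assume j: "j \<in> {..<k}"
      have jk: "j < k" using j by simp
      note [measurable] = Sm[OF jk] vm[OF jk]
      show "Measurable.pred M (\<lambda>x. S j x \<longrightarrow> v x j \<le> v x i)" by measurable
    qed
    note [measurable] = B
    show ?thesis unfolding eq by measurable
  next
    case False then show ?thesis by simp
  qed
qed

lemma expo_vec_comp[measurable]: "i < k \<Longrightarrow> (\<lambda>x. x i) \<in> borel_measurable (expo_vec k l)"
  unfolding expo_vec_def
  by (subst measurable_cong_sets[OF refl sets_expo[symmetric]]) (rule measurable_component_singleton, simp)

lemma rnm_meas: "rnm_out q D \<omega> k \<in> measurable (expo_vec k l) (count_space UNIV)"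
proof -
  have "(\<lambda>Y. argmax_idx (\<lambda>i. q D (\<omega> i) + Y i) {..<k}) \<in> measurable (expo_vec k l) (count_space UNIV)"
    using argmax_meas[of k "\<lambda>_ _. True" "expo_vec k l" "\<lambda>Y i. q D (\<omega> i) + Y i"] by (simp add: lessThan_def)
  then show ?thesis unfolding rnm_out_def
    by (rule measurable_compose[OF _ measurable_count_space])
qed

lemma algB_meas: "algB_out q D \<omega> k \<in> measurable (expo_vec k l \<Otimes>\<^sub>M expo_vec k l) (count_space UNIV)"
proof -
  let ?qs = "q_star q D \<omega> k"
  have "(\<lambda>Xz. argmax_idx (\<lambda>i. min ?qs (q D (\<omega> i) + fst Xz i) + snd Xz i)
          {i\<in>{..<k}. min ?qs (q D (\<omega> i) + fst Xz i) = ?qs}) \<in> measurable (expo_vec k l \<Otimes>\<^sub>M expo_vec k l) (count_space UNIV)"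
    by (rule argmax_meas) auto
  then show ?thesis unfolding algB_out_def Let_def
    by (rule measurable_compose[OF _ measurable_count_space])
qed

theorem lemma3:
  fixes adj :: "'d \<Rightarrow> 'd \<Rightarrow> bool"
    and q :: "'d \<Rightarrow> 'o \<Rightarrow> real" and D :: 'd
    and \<omega> :: "nat \<Rightarrow> 'o" and k :: nat and \<Delta> \<epsilon> :: real
  assumes "k \<ge> 1"
    and "inj_on \<omega> {..<k}"
    and "\<Delta> > 0"
    and "\<forall>D1 D2 w. adj D1 D2 \<longrightarrow> \<bar>q D1 w - q D2 w\<bar> \<le> \<Delta>"
    and "\<epsilon> > 0"
  shows "intermediate_B q D \<omega> k \<epsilon> \<Delta> = report_noisy_max_expo q D \<omega> k \<epsilon> \<Delta>"
proof -
  define l where "l = \<epsilon> / (2 * \<Delta>)"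
  have l: "0 < l" unfolding l_def using assms by simp
  have k: "k \<ge> 1" using assms by simp
  define qi where "qi i = q D (\<omega> i)" for i
  define c where "c i = q_star q D \<omega> k - qi i" for i
  have c: "0 \<le> c i" if "i < k" for i
    unfolding c_def q_star_def qi_def using that by (auto intro: Max_ge)
  interpret E: prob_space "expo l" using prob_expo[OF l] .
  interpret P: product_prob_space "\<lambda>_. expo l" "{..<k}"
    by unfold_locales
  interpret M: prob_space "expo_vec k l" unfolding expo_vec_def
    by (rule prob_space_PiM) (simp add: prob_expo[OF l])
  interpret MM: pair_sigma_finite "expo_vec k l" "expo_vec k l" by unfold_locales
  have AE0: "AE x in expo l. 0 \<le> x"
    unfolding expo_def by (subst AE_density) (auto simp: exponential_density_def)
  have AE1: "AE X in expo_vec k l. \<forall>i\<in>{..<k}. 0 \<le> X i"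
  proof (rule AE_finite_allI)
    show "finite {..<k}" by simp
    fix i assume "i \<in> {..<k}"
    then show "AE X in expo_vec k l. 0 \<le> X i"
      unfolding expo_vec_def by (rule P.AE_component) (rule AE0)
  qed
  have predm: "Measurable.pred (expo_vec k l \<Otimes>\<^sub>M expo_vec k l) (\<lambda>xz. \<forall>i\<in>{..<k}. 0 \<le> fst xz i \<and> 0 \<le> snd xz i)"
  proof (rule pred_intros_finite(3))
    show "finite {..<k}" by simp
    fix i assume "i \<in> {..<k}"
    then have ik[measurable]: "i < k" by simp
    show "Measurable.pred (expo_vec k l \<Otimes>\<^sub>M expo_vec k l) (\<lambda>xz. 0 \<le> fst xz i \<and> 0 \<le> snd xz i)"
      by measurable
  qed
  have AE2: "AE xz in expo_vec k l \<Otimes>\<^sub>M expo_vec k l. \<forall>i\<in>{..<k}. 0 \<le> fst xz i \<and> 0 \<le> snd xz i"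
  proof (rule MM.AE_pair_measure)
    show "{x \<in> space (expo_vec k l \<Otimes>\<^sub>M expo_vec k l). \<forall>i\<in>{..<k}. 0 \<le> fst x i \<and> 0 \<le> snd x i}
          \<in> sets (expo_vec k l \<Otimes>\<^sub>M expo_vec k l)"
      using predm by measurable
    show "AE X in expo_vec k l. AE z in expo_vec k l. \<forall>i\<in>{..<k}. 0 \<le> fst (X, z) i \<and> 0 \<le> snd (X, z) i"
      using AE1 by eventually_elim (use AE1 in \<open>eventually_elim, auto\<close>)
  qed
  have AE3: "AE xz in expo_vec k l \<Otimes>\<^sub>M expo_vec k l. algB_out q D \<omega> k xz = (rnm_out q D \<omega> k \<circ> Tm k c) xz"
    using AE2
  proof eventually_elim
    fix xz :: "(nat \<Rightarrow> real) \<times> (nat \<Rightarrow> real)"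
    assume H: "\<forall>i\<in>{..<k}. 0 \<le> fst xz i \<and> 0 \<le> snd xz i"
    obtain X z where xz: "xz = (X, z)" by (cases xz)
    have "argmax_idx (\<lambda>i. min (Max (qi ` {..<k})) (qi i + X i) + z i) {i\<in>{..<k}. min (Max (qi ` {..<k})) (qi i + X i) = Max (qi ` {..<k})}
       = argmax_idx (\<lambda>i. qi i + Tm k (\<lambda>i. Max (qi ` {..<k}) - qi i) (X, z) i) {..<k}"
      by (rule argmax_pw) (use k H xz in auto)
    then show "algB_out q D \<omega> k xz = (rnm_out q D \<omega> k \<circ> Tm k c) xz"
      unfolding xz algB_out_def rnm_out_def Let_def c_def q_star_def qi_def by simp
  qed
  have "intermediate_B q D \<omega> k \<epsilon> \<Delta> = distr (expo_vec k l \<Otimes>\<^sub>M expo_vec k l) (count_space UNIV) (algB_out q D \<omega> k)"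
    unfolding intermediate_B_def l_def ..
  also have "\<dots> = distr (expo_vec k l \<Otimes>\<^sub>M expo_vec k l) (count_space UNIV) (rnm_out q D \<omega> k \<circ> Tm k c)"
    by (rule distr_cong_AE[OF refl refl AE3 algB_meas measurable_comp[OF Tm_measurable rnm_meas]])
  also have "\<dots> = distr (distr (expo_vec k l \<Otimes>\<^sub>M expo_vec k l) (expo_vec k l) (Tm k c)) (count_space UNIV) (rnm_out q D \<omega> k)"
    by (rule distr_distr[OF rnm_meas Tm_measurable, symmetric])
  also have "\<dots> = distr (expo_vec k l) (count_space UNIV) (rnm_out q D \<omega> k)"
    by (simp only: distr_Tm[OF l c])
  also have "\<dots> = report_noisy_max_expo q D \<omega> k \<epsilon> \<Delta>"
    unfolding report_noisy_max_expo_def l_def ..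
  finally show ?thesis .
qed

end
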